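(* Let $s\ge2$ and $n\ge1$ be integers and $r_\pm=s\left(1\pm\sqrt{1-1/s}\right)$. Then $$\dim\ker(H_n^s)=\sum_{k=0}^n|T_k|=\frac{r_+^{n+1}+r_-^{n+1}-2}{2(s-1)},$$ and asymptotically $\dim\ker(H_n^s)\approx r_+^{n+1}/[2(s-1)]$ (the ratio tends to $1$ as $n\to\infty$).
   Context: Let $\Sigma=\{-s,\dots,s\}$, $\Sigma_*=\Sigma\setminus\{0\}$. The spin chain on $n$ sites has local space $\mathbb{C}^{2s+1}$ with basis $\{|j\rangle:j\in\Sigma\}$. For $m\in\Sigma_*$, $P^m=|\phi_m\rangle\langle\phi_m|$ with $|\phi_m\rangle=\frac1{\sqrt2}(|0,m\rangle-|m,0\rangle)$; for $m\in\{1,\dots,s\}$, $Q^m=|\chi_m\rangle\langle\chi_m|$ with $|\chi_m\rangle=\frac1{\sqrt2}(|0,0\rangle-|m,-m\rangle)$, acting on two neighboring spins. $H_n^s=\sum_{k=1}^{n-1}\big(\sum_{m\in\Sigma_*}P^m_{k,k+1}+\sum_{m=1}^sQ^m_{k,k+1}\big)$. For $k\ge0$, $T_k\subseteq\Sigma_*^k$ is the set of strings $t_1\cdots t_k$ with no index $j$ such that $t_j=m\in\{1,\dots,s\}$ and $t_{j+1}=-m$ ($T_0$ consists of the empty string). *)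

theory Defs
  imports "HOL-Analysis.Analysis" "Jordan_Normal_Form.Matrix_Kernel"
begin

text \<open>Local dimension 2s+1; basis vectors of the n-site chain are indexed by
  i < (2s+1)^n, the spin at site k (k = 0..n-1) being the k-th base-(2s+1) digit minus s.\<close>

definition ldim :: "nat \<Rightarrow> nat" where "ldim s = 2 * s + 1"

definition spin :: "nat \<Rightarrow> nat \<Rightarrow> nat \<Rightarrow> int" where
  "spin s i k = int ((i div ldim s ^ k) mod ldim s) - int s"

definition Sigma_star :: "nat \<Rightarrow> int set" where
  "Sigma_star s = {- int s .. int s} - {0}"

definition kd :: "int \<Rightarrow> int \<Rightarrow> complex" where "kd a b = (if a = b then 1 else 0)"

definition phi :: "int \<Rightarrow> int \<Rightarrow> int \<Rightarrow> complex" where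
  "phi m x y = (kd x 0 * kd y m - kd x m * kd y 0) / complex_of_real (sqrt 2)"

definition chi :: "int \<Rightarrow> int \<Rightarrow> int \<Rightarrow> complex" where
  "chi m x y = (kd x 0 * kd y 0 - kd x m * kd y (-m)) / complex_of_real (sqrt 2)"

text \<open>Matrix element <x,y| (sum_m P^m + sum_{m=1}^s Q^m) |x',y'>.\<close>
definition hloc :: "nat \<Rightarrow> int \<Rightarrow> int \<Rightarrow> int \<Rightarrow> int \<Rightarrow> complex" where
  "hloc s x y x' y' =
     (\<Sum>m\<in>Sigma_star s. phi m x y * cnj (phi m x' y'))
   + (\<Sum>m\<in>{1..int s}. chi m x y * cnj (chi m x' y'))"

definition Ham :: "nat \<Rightarrow> nat \<Rightarrow> complex mat" where
  "Ham s n = mat (ldim s ^ n) (ldim s ^ n) (\<lambda>(i, j).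
     \<Sum>k<n - 1. (if (\<forall>l<n. l \<noteq> k \<and> l \<noteq> k + 1 \<longrightarrow> spin s i l = spin s j l)
                 then hloc s (spin s i k) (spin s i (k+1)) (spin s j k) (spin s j (k+1))
                 else 0))"

definition T :: "nat \<Rightarrow> nat \<Rightarrow> int list set" where
  "T s k = {t. length t = k \<and> set t \<subseteq> Sigma_star s \<and>
     \<not> (\<exists>j. j + 1 < k \<and> t ! j \<in> {1 .. int s} \<and> t ! (j + 1) = - (t ! j))}"

end

theory Submission
  imports Defs
begin


section \<open>Reduction of words\<close>

fun push :: "int \<Rightarrow> int list \<Rightarrow> int list" where
  "push x [] = [x]"
| "push x (y#ys) = (if x > 0 \<and> y = -x then ys else x#y#ys)"

fun red :: "int list \<Rightarrow> int list" where
  "red [] = []"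
| "red (x#xs) = (if x = 0 then red xs else push x (red xs))"

fun rdd :: "int list \<Rightarrow> bool" where
  "rdd [] = True"
| "rdd [x] = True"
| "rdd (x#y#ys) = (\<not>(x > 0 \<and> y = -x) \<and> rdd (y#ys))"

definition Sg :: "nat \<Rightarrow> int set" where "Sg s = {- int s .. int s}"
definition Cf :: "nat \<Rightarrow> nat \<Rightarrow> int list set" where
  "Cf s n = {xs. length xs = n \<and> set xs \<subseteq> Sg s}"
definition canon :: "nat \<Rightarrow> int list \<Rightarrow> int list" where
  "canon n w = w @ replicate (n - length w) 0"

lemma push_neg: "x < 0 \<Longrightarrow> push x w = x # w"
  by (cases w) auto

lemma red_cong: "red A = red B \<Longrightarrow> red (pre @ A) = red (pre @ B)"
  by (induction pre) auto

lemma red_move1: "m \<noteq> 0 \<Longrightarrow> red (pre @ [0,m] @ post) = red (pre @ [m,0] @ post)"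
  by (rule red_cong) auto

lemma red_move2: "m > 0 \<Longrightarrow> red (pre @ [0,0] @ post) = red (pre @ [m,-m] @ post)"
  by (rule red_cong) (auto simp: push_neg)

lemma rdd_Cons: "rdd (x # t) \<longleftrightarrow> rdd t \<and> (t = [] \<or> \<not>(x > 0 \<and> hd t = -x))"
  by (cases t) auto

lemma push_props:
  assumes "rdd w" "x \<noteq> 0"
  shows "rdd (push x w)" "set (push x w) \<subseteq> insert x (set w)" "length (push x w) \<le> Suc (length w)"
  using assms by (cases w; auto simp: rdd_Cons)+

lemma red_props: "rdd (red xs) \<and> set (red xs) \<subseteq> set xs - {0} \<and> length (red xs) \<le> length xs"
proof (induction xs)
  case Nil then show ?case by simp
next
  case (Cons x xs)
  then show ?case using push_props[of "red xs" x] by auto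
qed

lemma red_id: "rdd w \<Longrightarrow> 0 \<notin> set w \<Longrightarrow> red w = w"
proof (induction w)
  case Nil then show ?case by simp
next
  case (Cons x w)
  then show ?case by (cases w) (auto simp: rdd_Cons)
qed

lemma red_zeros: "red (replicate r 0) = []"
  by (induction r) auto

lemma red_canon: "rdd w \<Longrightarrow> 0 \<notin> set w \<Longrightarrow> red (canon n w) = w"
  unfolding canon_def using red_cong[of "replicate (n - length w) 0" "[]" w] red_zeros red_id
  by simp

lemma rdd_nth: "rdd t \<longleftrightarrow> \<not> (\<exists>j. j + 1 < length t \<and> t ! j > 0 \<and> t ! (j + 1) = - (t ! j))"
proof (induction t rule: rdd.induct)
  case (3 x y ys)
  have "(\<exists>j. j + 1 < length (x#y#ys) \<and> (x#y#ys) ! j > 0 \<and> (x#y#ys) ! (j + 1) = - ((x#y#ys) ! j))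
     \<longleftrightarrow> (x > 0 \<and> y = -x) \<or> (\<exists>j. j + 1 < length (y#ys) \<and> (y#ys) ! j > 0 \<and> (y#ys) ! (j + 1) = - ((y#ys) ! j))"
    (is "?L \<longleftrightarrow> ?R")
  proof
    assume ?L
    then obtain j where j: "j + 1 < length (x#y#ys)" "(x#y#ys) ! j > 0" "(x#y#ys) ! (j + 1) = - ((x#y#ys) ! j)" by blast
    show ?R
    proof (cases j)
      case 0 then show ?thesis using j by auto
    next
      case (Suc j') then show ?thesis using j by (intro disjI2 exI[of _ j']) auto
    qed
  next
    assume ?R
    then show ?L
    proof
      assume "x > 0 \<and> y = -x" then show ?L by (intro exI[of _ 0]) auto
    next
      assume "\<exists>j. j + 1 < length (y#ys) \<and> (y#ys) ! j > 0 \<and> (y#ys) ! (j + 1) = - ((y#ys) ! j)"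
      then obtain j where "j + 1 < length (y#ys) \<and> (y#ys) ! j > 0 \<and> (y#ys) ! (j + 1) = - ((y#ys) ! j)" by blast
      then show ?L by (intro exI[of _ "Suc j"]) auto
    qed
  qed
  then show ?case using 3 by simp
qed (auto simp: less_Suc_eq)

lemma Sigma_star_alt: "Sigma_star s = Sg s - {0}"
  unfolding Sigma_star_def Sg_def by auto

lemma T_alt: "T s k = {t. length t = k \<and> set t \<subseteq> Sigma_star s \<and> rdd t}"
proof -
  have "set t \<subseteq> Sigma_star s \<Longrightarrow> j < length t \<Longrightarrow> (t ! j \<in> {1..int s}) = (t ! j > 0)" for t j
  proof -
    assume a: "set t \<subseteq> Sigma_star s" "j < length t"
    then have "t ! j \<in> Sigma_star s" using nth_mem[of j t] by blast
    then show ?thesis unfolding Sigma_star_def by auto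
  qed
  then show ?thesis unfolding T_def rdd_nth
    by (auto; metis Suc_eq_plus1 Suc_lessD)
qed

definition minv :: "nat \<Rightarrow> nat \<Rightarrow> (int list \<Rightarrow> 'a) \<Rightarrow> bool" where
 "minv s n f \<longleftrightarrow> (\<forall>pre post m. length pre + length post + 2 = n \<and> set pre \<subseteq> Sg s \<and> set post \<subseteq> Sg s \<longrightarrow>
    (m \<in> Sigma_star s \<longrightarrow> f (pre @ [0,m] @ post) = f (pre @ [m,0] @ post)) \<and>
    (m \<in> {1..int s} \<longrightarrow> f (pre @ [0,0] @ post) = f (pre @ [m,-m] @ post)))"

lemma Sigma_star_Sg: "Sigma_star s \<subseteq> Sg s"
  unfolding Sigma_star_def Sg_def by auto

lemma minv_Cons: "minv s (Suc n) f \<Longrightarrow> x \<in> Sg s \<Longrightarrow> minv s n (\<lambda>ys. f (x#ys))"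
  unfolding minv_def
proof (intro allI impI)
  fix pre post m
  assume f: "\<forall>pre post m. length pre + length post + 2 = Suc n \<and> set pre \<subseteq> Sg s \<and> set post \<subseteq> Sg s \<longrightarrow>
    (m \<in> Sigma_star s \<longrightarrow> f (pre @ [0,m] @ post) = f (pre @ [m,0] @ post)) \<and>
    (m \<in> {1..int s} \<longrightarrow> f (pre @ [0,0] @ post) = f (pre @ [m,-m] @ post))"
    and x: "x \<in> Sg s"
    and h: "length pre + length post + 2 = n \<and> set pre \<subseteq> Sg s \<and> set post \<subseteq> Sg s"
  from f[rule_format, of "x#pre" post m] x h
  show "(m \<in> Sigma_star s \<longrightarrow> f (x # pre @ [0, m] @ post) = f (x # pre @ [m, 0] @ post)) \<and>
       (m \<in> {1..int s} \<longrightarrow> f (x # pre @ [0, 0] @ post) = f (x # pre @ [m, - m] @ post))"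
    by simp
qed

lemma zero_move:
  assumes "minv s n f" "set w \<subseteq> Sigma_star s"
  shows "set pre \<subseteq> Sg s \<Longrightarrow> set post \<subseteq> Sg s \<Longrightarrow> length pre + length w + length post + 1 = n \<Longrightarrow>
     f (pre @ 0 # w @ post) = f (pre @ w @ 0 # post)"
  using assms(2)
proof (induction w arbitrary: pre)
  case Nil then show ?case by simp
next
  case (Cons y w)
  have y: "y \<in> Sigma_star s" and w: "set w \<subseteq> Sigma_star s" using Cons by auto
  have "set w \<subseteq> Sg s" using w Sigma_star_Sg[of s] by (rule order_trans)
  then have "set (w @ post) \<subseteq> Sg s" using Cons.prems by auto
  then have "f (pre @ [0,y] @ (w @ post)) = f (pre @ [y,0] @ (w @ post))"
    using assms(1) y Cons unfolding minv_def by auto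
  also have "\<dots> = f ((pre @ [y]) @ 0 # w @ post)" by simp
  also have "\<dots> = f ((pre @ [y]) @ w @ 0 # post)"
    using Cons.prems y w by (intro Cons.IH) (use Sigma_star_Sg[of s] in auto)
  finally show ?case by simp
qed

lemma connect: "minv s n f \<Longrightarrow> xs \<in> Cf s n \<Longrightarrow> f xs = f (canon n (red xs))"
proof (induction xs arbitrary: n f)
  case Nil then show ?case by (simp add: canon_def Cf_def)
next
  case (Cons x xs)
  then obtain n' where n: "n = Suc n'" and xs: "xs \<in> Cf s n'" and x: "x \<in> Sg s"
    unfolding Cf_def by (cases n) auto
  define w where "w = red xs"
  have wp: "rdd w" "set w \<subseteq> Sigma_star s" "length w \<le> n'"
    using red_props[of xs] xs unfolding w_def Cf_def Sigma_star_alt by auto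
  define r where "r = n' - length w"
  have f0: "minv s n f" by fact
  have IH: "f (x # xs) = f (x # canon n' w)"
    using Cons.IH[OF minv_Cons[OF Cons.prems(1)[unfolded n] x] xs] unfolding w_def by simp
  have zs: "set (replicate k (0::int)) \<subseteq> Sg s" for k unfolding Sg_def by auto
  show ?case
  proof (cases "x = 0")
    case True
    have "f (x # canon n' w) = f ([] @ 0 # w @ replicate r 0)"
      using True unfolding canon_def r_def by simp
    also have "\<dots> = f ([] @ w @ 0 # replicate r 0)"
      using zero_move[OF f0 wp(2), of "[]" "replicate r 0"] zs wp unfolding r_def n by simp
    also have "\<dots> = f (canon n (red (x # xs)))"
      using True wp unfolding canon_def r_def n w_def
      by (simp add: Suc_diff_le replicate_append_same[symmetric])
    finally show ?thesis using IH by simp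
  next
    case False
    show ?thesis
    proof (cases "x > 0 \<and> w \<noteq> [] \<and> hd w = -x")
      case True
      then obtain w' where w': "w = -x # w'" by (cases w) auto
      have xs': "x \<in> {1..int s}" using x True unfolding Sg_def by auto
      have w'p: "set w' \<subseteq> Sigma_star s" using wp w' by auto
      have "f (x # canon n' w) = f ([] @ [x, -x] @ (w' @ replicate r 0))"
        unfolding canon_def r_def w' by simp
      also have "\<dots> = f ([] @ [0, 0] @ (w' @ replicate r 0))"
      proof -
        have "set (w' @ replicate r 0) \<subseteq> Sg s" using w'p Sigma_star_Sg zs by auto
        moreover have "length ([]::int list) + length (w' @ replicate r 0) + 2 = n"
          using wp(3) unfolding r_def n w' by simp
        ultimately show ?thesis using f0 xs' unfolding minv_def by (metis empty_subsetI list.set(1))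
      qed
      also have "\<dots> = f ([0] @ 0 # w' @ replicate r 0)" by simp
      also have "\<dots> = f ([0] @ w' @ 0 # replicate r 0)"
        using zero_move[OF f0 w'p, of "[0]" "replicate r 0"] zs wp(3) unfolding r_def n w'
        by (simp add: Sg_def)
      also have "\<dots> = f ([] @ 0 # w' @ (0 # replicate r 0))" by simp
      also have "\<dots> = f ([] @ w' @ 0 # (0 # replicate r 0))"
        using zero_move[OF f0 w'p, of "[]" "0 # replicate r 0"] zs wp(3) unfolding r_def n w'
        by (simp add: Sg_def)
      also have "\<dots> = f (canon n (red (x # xs)))"
      proof -
        have "red (x # xs) = w'" using False True w' unfolding w_def by simp
        moreover have "n' - length w' = Suc (n' - Suc (length w'))" using wp(3) unfolding w' by simp
        ultimately show ?thesis using wp(3) False unfolding canon_def r_def n w'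
          by (simp add: replicate_append_same[symmetric] Suc_diff_le numeral_2_eq_2)
      qed
      finally show ?thesis using IH by simp
    next
      case nc: False
      have "push x w = x # w" using nc by (cases w) auto
      then show ?thesis using IH False wp(3) unfolding canon_def n w_def by simp
    qed
  qed
qed

section \<open>Counting\<close>

definition TT :: "nat \<Rightarrow> nat \<Rightarrow> int list set" where
  "TT s k = {t. length t = k \<and> set t \<subseteq> Sigma_star s \<and> rdd t}"

lemma T_TT: "T s k = TT s k" unfolding T_alt TT_def ..

lemma finite_Sigma_star: "finite (Sigma_star s)" unfolding Sigma_star_def by auto

lemma finite_TT: "finite (TT s k)"
proof -
  have "TT s k \<subseteq> {t. set t \<subseteq> Sigma_star s \<and> length t = k}" unfolding TT_def by auto
  then show ?thesis using finite_lists_length_eq[OF finite_Sigma_star] finite_subset by blast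
qed

lemma red_image: "red ` Cf s n = (\<Union>k\<in>{0..n}. TT s k)"
proof
  show "red ` Cf s n \<subseteq> (\<Union>k\<in>{0..n}. TT s k)"
  proof
    fix t assume "t \<in> red ` Cf s n"
    then obtain xs where xs: "xs \<in> Cf s n" "t = red xs" by blast
    then show "t \<in> (\<Union>k\<in>{0..n}. TT s k)"
      using red_props[of xs] unfolding Cf_def TT_def Sigma_star_alt by auto
  qed
next
  show "(\<Union>k\<in>{0..n}. TT s k) \<subseteq> red ` Cf s n"
  proof
    fix t assume "t \<in> (\<Union>k\<in>{0..n}. TT s k)"
    then have t: "length t \<le> n" "set t \<subseteq> Sigma_star s" "rdd t" unfolding TT_def by auto
    have z: "0 \<notin> set t" using t(2) unfolding Sigma_star_def by auto
    have "canon n t \<in> Cf s n" using t Sigma_star_Sg[of s] unfolding canon_def Cf_def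
      by (auto simp: Sg_def)
    moreover have "red (canon n t) = t" using red_canon[OF t(3) z] .
    ultimately show "t \<in> red ` Cf s n" by (metis image_eqI)
  qed
qed

lemma card_red_image: "card (red ` Cf s n) = (\<Sum>k=0..n. card (TT s k))"
  unfolding red_image
  by (rule card_UN_disjoint) (auto simp: finite_TT finite_TT[unfolded TT_def] TT_def)

lemma card_Sigma_star: "card (Sigma_star s) = 2 * s"
proof -
  have e: "Sigma_star s = {- int s..-1} \<union> {1..int s}" unfolding Sigma_star_def by auto
  have "card (Sigma_star s) = card {- int s..-1} + card {1..int s}"
    unfolding e by (rule card_Un_disjoint) auto
  then show ?thesis by simp
qed

lemma TT0: "card (TT s 0) = 1"
proof -
  have "TT s 0 = {[]}" unfolding TT_def by auto
  then show ?thesis by simp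
qed

definition okc :: "int \<Rightarrow> int list \<Rightarrow> bool" where
  "okc x t \<longleftrightarrow> \<not>(x > 0 \<and> t \<noteq> [] \<and> hd t = -x)"

lemma TT_Suc: "TT s (Suc k) = (\<Union>x\<in>Sigma_star s. (#) x ` {t\<in>TT s k. okc x t})"
proof (intro equalityI subsetI)
  fix t assume "t \<in> TT s (Suc k)"
  then obtain x t' where t: "t = x # t'" unfolding TT_def by (cases t) auto
  show "t \<in> (\<Union>x\<in>Sigma_star s. (#) x ` {t\<in>TT s k. okc x t})"
    using \<open>t \<in> TT s (Suc k)\<close> unfolding t TT_def okc_def by (auto simp: rdd_Cons)
next
  fix t assume "t \<in> (\<Union>x\<in>Sigma_star s. (#) x ` {t\<in>TT s k. okc x t})"
  then show "t \<in> TT s (Suc k)" unfolding TT_def okc_def by (auto simp: rdd_Cons)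
qed

lemma card_TT_Suc: "card (TT s (Suc k)) = (\<Sum>x\<in>Sigma_star s. card {t\<in>TT s k. okc x t})"
  unfolding TT_Suc
  by (subst card_UN_disjoint) (auto simp: finite_Sigma_star finite_TT card_image)

lemma TT1: "card (TT s 1) = 2 * s"
proof -
  have "card {t\<in>TT s 0. okc x t} = 1" for x
  proof -
    have "{t\<in>TT s 0. okc x t} = {[]}" unfolding TT_def okc_def by auto
    then show ?thesis by simp
  qed
  then show ?thesis using card_TT_Suc[of s 0] card_Sigma_star[of s] by simp
qed

lemma TT_SS: "card (TT s (Suc (Suc k))) + s * card (TT s k) = 2 * s * card (TT s (Suc k))"
proof -
  let ?c = "\<lambda>k. card (TT s k)"
  have neg: "card {t\<in>TT s (Suc k). okc x t} = ?c (Suc k)" if "x < 0" for x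
  proof -
    have "{t\<in>TT s (Suc k). okc x t} = TT s (Suc k)" using that unfolding okc_def by auto
    then show ?thesis by simp
  qed
  have pos: "card {t\<in>TT s (Suc k). okc x t} + ?c k = ?c (Suc k)" if "x \<in> {1..int s}" for x
  proof -
    have bad: "{t\<in>TT s (Suc k). \<not> okc x t} = (#) (-x) ` TT s k"
    proof (intro equalityI subsetI)
      fix t assume "t \<in> {t\<in>TT s (Suc k). \<not> okc x t}"
      then obtain t' where "t = -x # t'" "t' \<in> TT s k" unfolding TT_def okc_def
        by (cases t) (auto simp: rdd_Cons)
      then show "t \<in> (#) (-x) ` TT s k" by blast
    next
      fix t assume "t \<in> (#) (-x) ` TT s k"
      moreover have "-x \<in> Sigma_star s" using that unfolding Sigma_star_def by auto
      ultimately show "t \<in> {t\<in>TT s (Suc k). \<not> okc x t}"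
        using that unfolding TT_def okc_def by (auto simp: rdd_Cons)
    qed
    have "TT s (Suc k) = {t\<in>TT s (Suc k). okc x t} \<union> {t\<in>TT s (Suc k). \<not> okc x t}" by auto
    moreover have "card ({t\<in>TT s (Suc k). okc x t} \<union> {t\<in>TT s (Suc k). \<not> okc x t}) =
       card {t\<in>TT s (Suc k). okc x t} + card {t\<in>TT s (Suc k). \<not> okc x t}"
      by (rule card_Un_disjoint) (auto intro: finite_subset[OF _ finite_TT[of s "Suc k"]])
    ultimately have "?c (Suc k) = card {t\<in>TT s (Suc k). okc x t} + card {t\<in>TT s (Suc k). \<not> okc x t}"
      by simp
    then show ?thesis unfolding bad by (simp add: card_image)
  qed
  have split: "Sigma_star s = {- int s..-1} \<union> {1..int s}" unfolding Sigma_star_def by auto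
  have "?c (Suc (Suc k)) = (\<Sum>x\<in>{- int s..-1}. card {t\<in>TT s (Suc k). okc x t})
      + (\<Sum>x\<in>{1..int s}. card {t\<in>TT s (Suc k). okc x t})"
    unfolding card_TT_Suc split by (subst sum.union_disjoint) auto
  also have "(\<Sum>x\<in>{- int s..-1}. card {t\<in>TT s (Suc k). okc x t}) = s * ?c (Suc k)"
    using neg by simp
  finally have "?c (Suc (Suc k)) + s * ?c k = s * ?c (Suc k) +
     (\<Sum>x\<in>{1..int s}. card {t\<in>TT s (Suc k). okc x t} + ?c k)"
    by (simp add: sum.distrib)
  also have "(\<Sum>x\<in>{1..int s}. card {t\<in>TT s (Suc k). okc x t} + ?c k) = s * ?c (Suc k)"
    using pos by simp
  finally show ?thesis by simp
qed

section \<open>Closed form\<close>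

lemma quad_root:
  fixes a b S :: real
  assumes ab: "a + b = 2 * S" "a * b = S"
  shows "a^2 = 2 * S * a - S"
proof -
  have bsub: "b = 2*S - a" using ab(1) by simp
  have "a * b = 2*S*a - a^2" unfolding bsub by (simp add: power2_eq_square algebra_simps)
  then show ?thesis using ab(2) by linarith
qed

lemma closed_c:
  fixes a b S :: real and c :: "nat \<Rightarrow> real"
  assumes ab: "a + b = 2 * S" "a * b = S"
    and c0: "c 0 = 1" and c1: "c 1 = 2 * S"
    and cS: "\<And>k. c (Suc (Suc k)) = 2 * S * c (Suc k) - S * c k"
  shows "c k * (a - b) = a ^ (k + 1) - b ^ (k + 1)"
proof -
  have a2: "a^2 = 2 * S * a - S" using quad_root[OF ab] .
  have b2: "b^2 = 2 * S * b - S" using quad_root[of b a S] ab by (simp add: algebra_simps)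
  have "c k * (a - b) = a ^ (k + 1) - b ^ (k + 1) \<and> c (Suc k) * (a - b) = a ^ (k + 2) - b ^ (k + 2)"
  proof (induction k)
    case 0
    have "2*S*(a-b) = a^2 - b^2" unfolding ab(1)[symmetric] by (simp add: power2_eq_square algebra_simps)
    then show ?case using c0 c1 by (simp add: power2_eq_square)
  next
    case (Suc k)
    have "c (Suc (Suc k)) * (a - b) = (2 * S * c (Suc k) - S * c k) * (a - b)"
      by (simp only: cS)
    also have "\<dots> = 2 * S * (c (Suc k) * (a - b)) - S * (c k * (a - b))"
      by (simp add: algebra_simps)
    also have "\<dots> = 2 * S * (a ^ (k + 2) - b ^ (k + 2)) - S * (a ^ (k + 1) - b ^ (k + 1))"
      using Suc by simp
    also have "\<dots> = a ^ (k+1) * (2 * S * a - S) - b ^ (k+1) * (2 * S * b - S)"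
      by (simp add: algebra_simps power_add)
    also have "\<dots> = a ^ (k+1) * a^2 - b ^ (k+1) * b^2"
      unfolding a2 b2 ..
    also have "\<dots> = a ^ (k+3) - b ^ (k+3)"
      by (simp add: power2_eq_square numeral_3_eq_3)
    finally show ?case using Suc by (simp add: numeral_3_eq_3 numeral_2_eq_2)
  qed
  then show ?thesis by blast
qed

lemma closed_sum:
  fixes a b S :: real and c :: "nat \<Rightarrow> real"
  assumes ab: "a + b = 2 * S" "a * b = S" and abne: "a \<noteq> b"
    and c0: "c 0 = 1"
    and cc: "\<And>k. c k * (a - b) = a ^ (k + 1) - b ^ (k + 1)"
  shows "2 * (S - 1) * (\<Sum>k=0..n. c k) = a ^ (n + 1) + b ^ (n + 1) - 2"
proof (induction n)
  case 0 then show ?case using c0 ab by simp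
next
  case (Suc n)
  have a2: "a^2 = 2 * S * a - S" using quad_root[OF ab] .
  have b2: "b^2 = 2 * S * b - S" using quad_root[of b a S] ab by (simp add: algebra_simps)
  have e1: "(a - 1) * (a - b) = 2 * (S - 1) * a"
  proof -
    have "(a - 1) * (a - b) = a^2 - a*b - a + b" by (simp add: power2_eq_square algebra_simps)
    moreover have "2 * (S - 1) * a = 2*S*a - 2*a" by (simp add: algebra_simps)
    ultimately show ?thesis using a2 ab by linarith
  qed
  have e2: "(b - 1) * (a - b) = - 2 * (S - 1) * b"
  proof -
    have "(b - 1) * (a - b) = - (b^2 - a*b - b + a)" by (simp add: power2_eq_square algebra_simps)
    moreover have "- 2 * (S - 1) * b = - (2*S*b - 2*b)" by (simp add: algebra_simps)
    ultimately show ?thesis using b2 ab by linarith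
  qed
  have "2 * (S - 1) * c (Suc n) * (a - b) = 2 * (S - 1) * (c (Suc n) * (a - b))"
    by (simp only: mult.assoc)
  also have "\<dots> = 2 * (S - 1) * (a ^ (n + 2) - b ^ (n + 2))"
    using cc[of "Suc n"] by (simp add: numeral_2_eq_2)
  also have "\<dots> = a ^ (n + 1) * (2 * (S - 1) * a) - b ^ (n + 1) * (2 * (S - 1) * b)"
    by (simp add: algebra_simps power_add)
  also have "\<dots> = a ^ (n + 1) * ((a - 1) * (a - b)) + b ^ (n + 1) * ((b - 1) * (a - b))"
    unfolding e1 e2 by (simp add: algebra_simps)
  also have "\<dots> = (a ^ (n + 2) + b ^ (n + 2) - a ^ (n + 1) - b ^ (n + 1)) * (a - b)"
    by (simp add: algebra_simps power_add)
  finally have "2 * (S - 1) * c (Suc n) = a ^ (n + 2) + b ^ (n + 2) - a ^ (n + 1) - b ^ (n + 1)"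
    using abne by simp
  then show ?case using Suc by (simp add: algebra_simps)
qed

section \<open>Indices and configurations\<close>

definition dec :: "nat \<Rightarrow> nat \<Rightarrow> nat \<Rightarrow> int list" where
  "dec s n i = map (spin s i) [0..<n]"

fun enc :: "nat \<Rightarrow> int list \<Rightarrow> nat" where
  "enc s [] = 0"
| "enc s (x#xs) = nat (x + int s) + ldim s * enc s xs"

lemma ldim_pos: "ldim s > 0" unfolding ldim_def by simp

lemma spin_Suc: "spin s i (Suc k) = spin s (i div ldim s) k"
  unfolding spin_def by (simp add: div_mult2_eq)

lemma spin_0: "spin s i 0 = int (i mod ldim s) - int s"
  unfolding spin_def by simp

lemma spin_Sg: "spin s i k \<in> Sg s"
proof -
  define q where "q = (i div ldim s ^ k) mod ldim s"
  have "q < ldim s" unfolding q_def using ldim_pos by simp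
  then have "int q < int (2 * s + 1)" unfolding ldim_def by (simp only: of_nat_less_iff)
  moreover have "spin s i k = int q - int s" unfolding spin_def q_def ..
  ultimately show ?thesis unfolding Sg_def by simp
qed

lemma map_upt_Suc0: "map f [0..<Suc n] = f 0 # map (\<lambda>i. f (Suc i)) [0..<n]"
  by (induction n) auto

lemma dec_Suc: "dec s (Suc n) i = spin s i 0 # dec s n (i div ldim s)"
  unfolding dec_def map_upt_Suc0 spin_Suc ..

lemma dec_Cf: "dec s n i \<in> Cf s n"
  unfolding dec_def Cf_def using spin_Sg by auto

lemma enc_dec: "i < ldim s ^ n \<Longrightarrow> enc s (dec s n i) = i"
proof (induction n arbitrary: i)
  case 0 then show ?case by (simp add: dec_def)
next
  case (Suc n)
  have "i div ldim s < ldim s ^ n" using Suc.prems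
    by (simp add: less_mult_imp_div_less mult.commute)
  then have "enc s (dec s n (i div ldim s)) = i div ldim s" by (rule Suc.IH)
  then show ?case unfolding dec_Suc spin_0 by simp
qed

lemma dec_enc: "xs \<in> Cf s n \<Longrightarrow> dec s n (enc s xs) = xs \<and> enc s xs < ldim s ^ n"
proof (induction xs arbitrary: n)
  case Nil then show ?case by (simp add: Cf_def dec_def)
next
  case (Cons x xs)
  then obtain n' where n: "n = Suc n'" and xs: "xs \<in> Cf s n'" and x: "x \<in> Sg s"
    unfolding Cf_def by (cases n) auto
  define d where "d = nat (x + int s)"
  define e where "e = enc s xs"
  have d: "d < ldim s" "int d = x + int s" using x unfolding d_def Sg_def ldim_def by auto
  have IH: "dec s n' e = xs" "e < ldim s ^ n'" using Cons.IH[OF xs] unfolding e_def by auto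
  have enc: "enc s (x # xs) = d + ldim s * e" unfolding d_def e_def by simp
  have "d + ldim s * e < ldim s * ldim s ^ n'"
  proof -
    have "e + 1 \<le> ldim s ^ n'" using IH(2) by simp
    then have "ldim s * (e + 1) \<le> ldim s * ldim s ^ n'" by (rule mult_le_mono2)
    moreover have "ldim s * (e + 1) = ldim s * e + ldim s" by simp
    ultimately show ?thesis using d(1) by linarith
  qed
  moreover have "(d + ldim s * e) mod ldim s = d" using d(1) by simp
  moreover have "(d + ldim s * e) div ldim s = e" using d(1) by simp
  ultimately show ?case unfolding enc n dec_Suc spin_0 using d(2) IH(1) by simp
qed

lemma bij_dec: "bij_betw (dec s n) {0..<ldim s ^ n} (Cf s n)"
  by (rule bij_betw_byWitness[where f' = "enc s"]) (auto simp: enc_dec dec_enc dec_Cf)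

definition Hf :: "nat \<Rightarrow> nat \<Rightarrow> int list \<Rightarrow> int list \<Rightarrow> complex" where
  "Hf s n xs ys = (\<Sum>k<n - 1. (if (\<forall>l<n. l \<noteq> k \<and> l \<noteq> k + 1 \<longrightarrow> xs ! l = ys ! l)
                 then hloc s (xs ! k) (xs ! (k+1)) (ys ! k) (ys ! (k+1)) else 0))"

lemma Ham_carrier: "Ham s n \<in> carrier_mat (ldim s ^ n) (ldim s ^ n)"
  unfolding Ham_def by simp

lemma Ham_entry:
  assumes "i < ldim s ^ n" "j < ldim s ^ n"
  shows "Ham s n $$ (i, j) = Hf s n (dec s n i) (dec s n j)"
proof -
  have dn: "l < n \<Longrightarrow> dec s n i ! l = spin s i l" "l < n \<Longrightarrow> dec s n j ! l = spin s j l" for l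
    unfolding dec_def by auto
  have "(\<forall>l<n. l \<noteq> k \<and> l \<noteq> k + 1 \<longrightarrow> spin s i l = spin s j l) \<longleftrightarrow>
        (\<forall>l<n. l \<noteq> k \<and> l \<noteq> k + 1 \<longrightarrow> dec s n i ! l = dec s n j ! l)" for k
    using dn by auto
  moreover have "k < n - 1 \<Longrightarrow> hloc s (spin s i k) (spin s i (k+1)) (spin s j k) (spin s j (k+1)) =
     hloc s (dec s n i ! k) (dec s n i ! (k+1)) (dec s n j ! k) (dec s n j ! (k+1))" for k
    using dn[of k] dn[of "k+1"] by simp
  ultimately show ?thesis using assms unfolding Ham_def Hf_def
    by (auto intro!: sum.cong)
qed

lemma Ham_mult:
  assumes v: "dim_vec v = ldim s ^ n" and i: "i < ldim s ^ n"
  shows "(Ham s n *\<^sub>v v) $ i = (\<Sum>ys\<in>Cf s n. Hf s n (dec s n i) ys * v $ enc s ys)"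
proof -
  have "(Ham s n *\<^sub>v v) $ i = (\<Sum>j\<in>{0..<ldim s ^ n}. Ham s n $$ (i, j) * v $ j)"
    using i v Ham_carrier[of s n] by (simp add: scalar_prod_def)
  also have "\<dots> = (\<Sum>j\<in>{0..<ldim s ^ n}. Hf s n (dec s n i) (dec s n j) * v $ enc s (dec s n j))"
    using i by (intro sum.cong) (auto simp: Ham_entry enc_dec)
  also have "\<dots> = (\<Sum>ys\<in>Cf s n. Hf s n (dec s n i) ys * v $ enc s ys)"
    by (rule sum.reindex_bij_betw[OF bij_dec])
  finally show ?thesis .
qed

lemma upd_set:
  assumes xs: "xs \<in> Cf s n" and k: "k + 1 < n"
  shows "{ys\<in>Cf s n. (\<forall>l<n. l \<noteq> k \<and> l \<noteq> k + 1 \<longrightarrow> xs ! l = ys ! l)} =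
         (\<lambda>(a,b). xs[k:=a, Suc k:=b]) ` (Sg s \<times> Sg s)"
proof (intro equalityI subsetI)
  fix ys assume "ys \<in> {ys\<in>Cf s n. (\<forall>l<n. l \<noteq> k \<and> l \<noteq> k + 1 \<longrightarrow> xs ! l = ys ! l)}"
  then have ys: "ys \<in> Cf s n" "\<forall>l<n. l \<noteq> k \<and> l \<noteq> k + 1 \<longrightarrow> xs ! l = ys ! l" by auto
  have lx: "length xs = n" and ly: "length ys = n" and sy: "set ys \<subseteq> Sg s"
    using xs ys(1) unfolding Cf_def by auto
  have eq: "ys = xs[k := ys ! k, Suc k := ys ! Suc k]"
  proof (rule nth_equalityI)
    show "length ys = length (xs[k := ys ! k, Suc k := ys ! Suc k])" using lx ly by simp
  next
    fix l assume l: "l < length ys"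
    show "ys ! l = xs[k := ys ! k, Suc k := ys ! Suc k] ! l"
    proof (cases "l = k \<or> l = Suc k")
      case True then show ?thesis using l lx ly k by auto
    next
      case False then show ?thesis using l lx ly ys(2) by (simp add: nth_list_update_neq)
    qed
  qed
  have "ys ! k \<in> set ys" "ys ! Suc k \<in> set ys" using ly k by simp_all
  then have "(ys ! k, ys ! Suc k) \<in> Sg s \<times> Sg s" using sy by blast
  then show "ys \<in> (\<lambda>(a,b). xs[k:=a, Suc k:=b]) ` (Sg s \<times> Sg s)"
    by (rule image_eqI[rotated]) (simp add: eq[symmetric])
next
  fix ys assume "ys \<in> (\<lambda>(a,b). xs[k:=a, Suc k:=b]) ` (Sg s \<times> Sg s)"
  then obtain a b where ab: "a \<in> Sg s" "b \<in> Sg s" "ys = xs[k:=a, Suc k:=b]" by auto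
  have sx: "set xs \<subseteq> Sg s" and lx: "length xs = n" using xs unfolding Cf_def by auto
  have "set (xs[k:=a]) \<subseteq> insert a (set xs)" by (rule set_update_subset_insert)
  then have s1: "set (xs[k:=a]) \<subseteq> Sg s" using sx ab(1) by blast
  have "set (xs[k:=a, Suc k:=b]) \<subseteq> insert b (set (xs[k:=a]))" by (rule set_update_subset_insert)
  then have "set ys \<subseteq> Sg s" using s1 ab(2,3) by blast
  moreover have "length ys = n" using lx ab(3) by simp
  moreover have "\<forall>l<n. l \<noteq> k \<and> l \<noteq> k + 1 \<longrightarrow> xs ! l = ys ! l"
    unfolding ab(3) by (simp add: nth_list_update_neq)
  ultimately show "ys \<in> {ys\<in>Cf s n. (\<forall>l<n. l \<noteq> k \<and> l \<noteq> k + 1 \<longrightarrow> xs ! l = ys ! l)}"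
    unfolding Cf_def by blast
qed

lemma upd_inj:
  assumes "k + 1 < length xs"
  shows "inj_on (\<lambda>(a,b). xs[k:=a, Suc k:=b]) A"
proof (rule inj_onI)
  fix p q assume eq: "(\<lambda>(a,b). xs[k:=a, Suc k:=b]) p = (\<lambda>(a,b). xs[k:=a, Suc k:=b]) q"
  obtain a b where p: "p = (a,b)" by (cases p)
  obtain a' b' where q: "q = (a',b')" by (cases q)
  have e: "xs[k:=a, Suc k:=b] = xs[k:=a', Suc k:=b']" using eq unfolding p q by simp
  have "xs[k:=a, Suc k:=b] ! k = a" "xs[k:=a, Suc k:=b] ! Suc k = b"
       "xs[k:=a', Suc k:=b'] ! k = a'" "xs[k:=a', Suc k:=b'] ! Suc k = b'"
    using assms by simp_all
  then show "p = q" using e unfolding p q by metis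
qed

lemma if0_mult: "(if P then a else 0) * (b::'a::mult_zero) = (if P then a * b else 0)" by simp

lemma finite_Cf: "finite (Cf s n)" using bij_betw_finite[OF bij_dec] by simp

lemma Hf_apply:
  assumes xs: "xs \<in> Cf s n"
  shows "(\<Sum>ys\<in>Cf s n. Hf s n xs ys * f ys) =
    (\<Sum>k<n - 1. \<Sum>(a,b)\<in>Sg s \<times> Sg s. hloc s (xs ! k) (xs ! Suc k) a b * f (xs[k:=a, Suc k:=b]))"
proof -
  have len: "length xs = n" using xs unfolding Cf_def by simp
  let ?C = "\<lambda>k ys. (\<forall>l<n. l \<noteq> k \<and> l \<noteq> k + 1 \<longrightarrow> xs ! l = ys ! l)"
  have e1: "Hf s n xs ys * f ys = (\<Sum>k<n - 1. if ?C k ys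
                 then hloc s (xs ! k) (xs ! (k+1)) (ys ! k) (ys ! (k+1)) * f ys else 0)" for ys
    unfolding Hf_def sum_distrib_right by (intro sum.cong refl) (simp only: if0_mult)
  have "(\<Sum>ys\<in>Cf s n. Hf s n xs ys * f ys) =
     (\<Sum>k<n - 1. \<Sum>ys\<in>Cf s n. (if ?C k ys
                 then hloc s (xs ! k) (xs ! (k+1)) (ys ! k) (ys ! (k+1)) * f ys else 0))"
    unfolding e1 by (rule sum.swap)
  also have "\<dots> = (\<Sum>k<n - 1. \<Sum>(a,b)\<in>Sg s \<times> Sg s. hloc s (xs ! k) (xs ! Suc k) a b * f (xs[k:=a, Suc k:=b]))"
  proof (rule sum.cong[OF refl])
    fix k assume k: "k \<in> {..<n - 1}"
    then have k1: "k + 1 < n" by simp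
    have "(\<Sum>ys\<in>Cf s n. (if ?C k ys
                 then hloc s (xs ! k) (xs ! (k+1)) (ys ! k) (ys ! (k+1)) * f ys else 0)) =
          (\<Sum>ys\<in>{ys\<in>Cf s n. ?C k ys}.
                 hloc s (xs ! k) (xs ! (k+1)) (ys ! k) (ys ! (k+1)) * f ys)"
      by (rule sum.inter_filter[OF finite_Cf, symmetric])
    also have "\<dots> = (\<Sum>ys\<in>(\<lambda>(a,b). xs[k:=a, Suc k:=b]) ` (Sg s \<times> Sg s).
                 hloc s (xs ! k) (xs ! (k+1)) (ys ! k) (ys ! (k+1)) * f ys)"
      unfolding upd_set[OF xs k1] ..
    also have "\<dots> = (\<Sum>p\<in>Sg s \<times> Sg s. (\<lambda>ys. hloc s (xs ! k) (xs ! (k+1)) (ys ! k) (ys ! (k+1)) * f ys)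
                       ((\<lambda>(a,b). xs[k:=a, Suc k:=b]) p))"
      by (rule sum.reindex[unfolded comp_def, OF upd_inj]) (use k1 len in simp)
    also have "\<dots> = (\<Sum>(a,b)\<in>Sg s \<times> Sg s. hloc s (xs ! k) (xs ! Suc k) a b * f (xs[k:=a, Suc k:=b]))"
    proof (rule sum.cong[OF refl])
      fix p :: "int \<times> int" obtain a b where p: "p = (a, b)" by (cases p)
      show "(\<lambda>ys. hloc s (xs ! k) (xs ! (k+1)) (ys ! k) (ys ! (k+1)) * f ys)
                       ((\<lambda>(a,b). xs[k:=a, Suc k:=b]) p) =
            (\<lambda>(a,b). hloc s (xs ! k) (xs ! Suc k) a b * f (xs[k:=a, Suc k:=b])) p"
        unfolding p using k1 len by simp
    qed
    finally show "(\<Sum>ys\<in>Cf s n. (if ?C k ys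
                 then hloc s (xs ! k) (xs ! (k+1)) (ys ! k) (ys ! (k+1)) * f ys else 0)) =
          (\<Sum>(a,b)\<in>Sg s \<times> Sg s. hloc s (xs ! k) (xs ! Suc k) a b * f (xs[k:=a, Suc k:=b]))" .
  qed
  finally show ?thesis .
qed

abbreviation r2 :: complex where "r2 \<equiv> complex_of_real (sqrt 2)"

lemma finite_Sg: "finite (Sg s)" unfolding Sg_def by simp

lemma zero_Sg: "0 \<in> Sg s" unfolding Sg_def by simp

lemma Sigma_star_Sg': "m \<in> Sigma_star s \<Longrightarrow> m \<in> Sg s" using Sigma_star_Sg by blast

lemma pos_Sg: "m \<in> {1..int s} \<Longrightarrow> m \<in> Sg s" "m \<in> {1..int s} \<Longrightarrow> -m \<in> Sg s"
  "m \<in> {1..int s} \<Longrightarrow> m \<in> Sigma_star s"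
  unfolding Sg_def Sigma_star_def by auto

lemma kd_sum1: "c \<in> Sg s \<Longrightarrow> (\<Sum>b\<in>Sg s. kd b c * h b) = h c"
proof -
  assume c: "c \<in> Sg s"
  have "(\<Sum>b\<in>Sg s. kd b c * h b) = (\<Sum>b\<in>Sg s. if b = c then h b else 0)"
    unfolding kd_def by (intro sum.cong refl) simp
  also have "\<dots> = h c" using c finite_Sg by (simp add: sum.delta')
  finally show ?thesis .
qed

lemma kd_sum2: "a0 \<in> Sg s \<Longrightarrow> b0 \<in> Sg s \<Longrightarrow>
   (\<Sum>a\<in>Sg s. \<Sum>b\<in>Sg s. kd a a0 * (kd b b0 * g a b)) = g a0 b0"
  by (simp add: sum_distrib_left[symmetric] kd_sum1)

lemma sum_dd: "(\<Sum>a\<in>A. \<Sum>b\<in>B. (X a b - Y a b) / (r::complex)) =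
   ((\<Sum>a\<in>A. \<Sum>b\<in>B. X a b) - (\<Sum>a\<in>A. \<Sum>b\<in>B. Y a b)) / r"
  by (simp add: sum_subtractf diff_divide_distrib sum_divide_distrib)

lemma sum_phi: "m \<in> Sigma_star s \<Longrightarrow>
  (\<Sum>a\<in>Sg s. \<Sum>b\<in>Sg s. phi m a b * g a b) = (g 0 m - g m 0) / r2"
proof -
  assume m: "m \<in> Sigma_star s"
  have "phi m a b * g a b = (kd a 0 * (kd b m * g a b) - kd a m * (kd b 0 * g a b)) / r2" for a b
    unfolding phi_def by (simp add: algebra_simps)
  then have "(\<Sum>a\<in>Sg s. \<Sum>b\<in>Sg s. phi m a b * g a b) =
    ((\<Sum>a\<in>Sg s. \<Sum>b\<in>Sg s. kd a 0 * (kd b m * g a b)) - (\<Sum>a\<in>Sg s. \<Sum>b\<in>Sg s. kd a m * (kd b 0 * g a b))) / r2"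
    by (simp only: sum_dd)
  also have "\<dots> = (g 0 m - g m 0) / r2"
    using m by (simp add: kd_sum2 zero_Sg Sigma_star_Sg')
  finally show ?thesis .
qed

lemma sum_chi: "m \<in> {1..int s} \<Longrightarrow>
  (\<Sum>a\<in>Sg s. \<Sum>b\<in>Sg s. chi m a b * g a b) = (g 0 0 - g m (-m)) / r2"
proof -
  assume m: "m \<in> {1..int s}"
  have "chi m a b * g a b = (kd a 0 * (kd b 0 * g a b) - kd a m * (kd b (-m) * g a b)) / r2" for a b
    unfolding chi_def by (simp add: algebra_simps)
  then have "(\<Sum>a\<in>Sg s. \<Sum>b\<in>Sg s. chi m a b * g a b) =
    ((\<Sum>a\<in>Sg s. \<Sum>b\<in>Sg s. kd a 0 * (kd b 0 * g a b)) - (\<Sum>a\<in>Sg s. \<Sum>b\<in>Sg s. kd a m * (kd b (-m) * g a b))) / r2"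
    by (simp only: sum_dd)
  also have "\<dots> = (g 0 0 - g m (-m)) / r2"
    using m by (simp add: kd_sum2 zero_Sg pos_Sg)
  finally show ?thesis .
qed

lemma cnj_kd: "cnj (kd a b) = kd a b" unfolding kd_def by simp
lemma cnj_phi: "cnj (phi m a b) = phi m a b" unfolding phi_def by (simp add: cnj_kd)
lemma cnj_chi: "cnj (chi m a b) = chi m a b" unfolding chi_def by (simp add: cnj_kd)

lemma hloc_sum:
  "(\<Sum>(a,b)\<in>Sg s \<times> Sg s. hloc s x y a b * g a b) =
     (\<Sum>m\<in>Sigma_star s. phi m x y * ((g 0 m - g m 0) / r2)) +
     (\<Sum>m\<in>{1..int s}. chi m x y * ((g 0 0 - g m (-m)) / r2))"
proof -
  have "(\<Sum>(a,b)\<in>Sg s \<times> Sg s. hloc s x y a b * g a b) = (\<Sum>a\<in>Sg s. \<Sum>b\<in>Sg s. hloc s x y a b * g a b)"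
    by (rule sum.cartesian_product[symmetric])
  also have "\<dots> = (\<Sum>a\<in>Sg s. \<Sum>b\<in>Sg s.
      (\<Sum>m\<in>Sigma_star s. phi m x y * (phi m a b * g a b)) + (\<Sum>m\<in>{1..int s}. chi m x y * (chi m a b * g a b)))"
    by (simp only: hloc_def cnj_phi cnj_chi distrib_right sum_distrib_right mult.assoc)
  also have "\<dots> = (\<Sum>m\<in>Sigma_star s. \<Sum>a\<in>Sg s. \<Sum>b\<in>Sg s. phi m x y * (phi m a b * g a b)) +
      (\<Sum>m\<in>{1..int s}. \<Sum>a\<in>Sg s. \<Sum>b\<in>Sg s. chi m x y * (chi m a b * g a b))"
    unfolding sum.distrib
    by (subst (1 2) sum.swap, subst (1 2) sum.swap[where A = "Sg s"], rule refl)
  also have "\<dots> = (\<Sum>m\<in>Sigma_star s. phi m x y * ((g 0 m - g m 0) / r2)) +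
     (\<Sum>m\<in>{1..int s}. chi m x y * ((g 0 0 - g m (-m)) / r2))"
    by (simp add: sum_distrib_left[symmetric] sum_phi sum_chi)
  finally show ?thesis .
qed

lemma upd_split: "k + 1 < length xs \<Longrightarrow> xs[k:=a, Suc k:=b] = take k xs @ [a,b] @ drop (Suc (Suc k)) xs"
proof (rule nth_equalityI)
  assume k: "k + 1 < length xs"
  then show "length (xs[k:=a, Suc k:=b]) = length (take k xs @ [a,b] @ drop (Suc (Suc k)) xs)" by simp
  fix i assume i: "i < length (xs[k:=a, Suc k:=b])"
  consider "i < k" | "i = k" | "i = Suc k" | "i > Suc k" by linarith
  then show "xs[k:=a, Suc k:=b] ! i = (take k xs @ [a,b] @ drop (Suc (Suc k)) xs) ! i"
  proof cases
    case 4
    then have "(take k xs @ [a,b] @ drop (Suc (Suc k)) xs) ! i = drop (Suc (Suc k)) xs ! (i - Suc (Suc k))"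
      using k by (simp add: nth_append min_def)
    also have "\<dots> = xs ! i"
    proof -
      have "Suc (Suc k) + (i - Suc (Suc k)) = i" using 4 by simp
      then show ?thesis using 4 i by (simp add: nth_drop)
    qed
    finally show ?thesis using 4 by simp
  qed (use k in \<open>auto simp: nth_append min_def\<close>)
qed

lemma upd_Cf: "xs \<in> Cf s n \<Longrightarrow> a \<in> Sg s \<Longrightarrow> b \<in> Sg s \<Longrightarrow> xs[k:=a, Suc k:=b] \<in> Cf s n"
proof -
  assume xs: "xs \<in> Cf s n" and ab: "a \<in> Sg s" "b \<in> Sg s"
  have sx: "set xs \<subseteq> Sg s" and lx: "length xs = n" using xs unfolding Cf_def by auto
  have "set (xs[k:=a]) \<subseteq> insert a (set xs)" by (rule set_update_subset_insert)
  then have s1: "set (xs[k:=a]) \<subseteq> Sg s" using sx ab(1) by blast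
  have "set (xs[k:=a, Suc k:=b]) \<subseteq> insert b (set (xs[k:=a]))" by (rule set_update_subset_insert)
  then have "set (xs[k:=a, Suc k:=b]) \<subseteq> Sg s" using s1 ab(2) by blast
  then show ?thesis using lx unfolding Cf_def by simp
qed

lemma upd_upd: "xs[k:=a, Suc k:=b, k:=c, Suc k:=d] = xs[k:=c, Suc k:=d]"
  by (metis list_update_overwrite list_update_swap n_not_Suc_n)

definition Rk :: "nat \<Rightarrow> nat \<Rightarrow> nat \<Rightarrow> int list set" where
  "Rk s n k = {zs\<in>Cf s n. zs ! k = 0 \<and> zs ! Suc k = 0}"

lemma Cf_reindex:
  assumes k: "k + 1 < n"
  shows "(\<Sum>xs\<in>Cf s n. F xs) = (\<Sum>zs\<in>Rk s n k. \<Sum>a\<in>Sg s. \<Sum>b\<in>Sg s. F (zs[k:=a, Suc k:=b]))"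
proof -
  let ?h = "\<lambda>p. (fst p)[k:=fst (snd p), Suc k:=snd (snd p)]"
  have inj: "inj_on ?h (Rk s n k \<times> (Sg s \<times> Sg s))"
  proof (rule inj_onI)
    fix p q assume p: "p \<in> Rk s n k \<times> (Sg s \<times> Sg s)" and q: "q \<in> Rk s n k \<times> (Sg s \<times> Sg s)"
      and e: "?h p = ?h q"
    obtain zs a b where pp: "p = (zs, a, b)" by (cases p) auto
    obtain zs' a' b' where qq: "q = (zs', a', b')" by (cases q) auto
    have z: "zs \<in> Cf s n" "zs ! k = 0" "zs ! Suc k = 0" "zs' \<in> Cf s n" "zs' ! k = 0" "zs' ! Suc k = 0"
      using p q unfolding pp qq Rk_def by auto
    have l: "length zs = n" "length zs' = n" using z unfolding Cf_def by auto
    have e': "zs[k:=a, Suc k:=b] = zs'[k:=a', Suc k:=b']" using e unfolding pp qq by simp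
    have "zs[k:=a, Suc k:=b] ! k = zs'[k:=a', Suc k:=b'] ! k"
         "zs[k:=a, Suc k:=b] ! Suc k = zs'[k:=a', Suc k:=b'] ! Suc k" using e' by simp_all
    then have ab: "a = a'" "b = b'" using l k by simp_all
    have "zs[k:=a, Suc k:=b, k:=0, Suc k:=0] = zs'[k:=a', Suc k:=b', k:=0, Suc k:=0]" using e' by simp
    then have "zs[k:=0, Suc k:=0] = zs'[k:=0, Suc k:=0]" unfolding upd_upd .
    then have "zs = zs'" using z by (metis list_update_id)
    then show "p = q" unfolding pp qq using ab by simp
  qed
  have img: "?h ` (Rk s n k \<times> (Sg s \<times> Sg s)) = Cf s n"
  proof (intro equalityI subsetI)
    fix xs assume "xs \<in> ?h ` (Rk s n k \<times> (Sg s \<times> Sg s))"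
    then obtain zs a b where "zs \<in> Rk s n k" "a \<in> Sg s" "b \<in> Sg s" "xs = zs[k:=a, Suc k:=b]" by auto
    then show "xs \<in> Cf s n" unfolding Rk_def using upd_Cf by auto
  next
    fix xs assume xs: "xs \<in> Cf s n"
    have l: "length xs = n" using xs unfolding Cf_def by simp
    have "xs ! k \<in> set xs" "xs ! Suc k \<in> set xs" using l k by simp_all
    then have ab: "xs ! k \<in> Sg s" "xs ! Suc k \<in> Sg s" using xs unfolding Cf_def by auto
    have "xs[k:=0, Suc k:=0] \<in> Rk s n k" unfolding Rk_def using upd_Cf[OF xs zero_Sg zero_Sg] l k by simp
    moreover have "xs = ?h (xs[k:=0, Suc k:=0], xs ! k, xs ! Suc k)"
    proof -
      have "xs[k:=0, Suc k:=0, k:=xs ! k, Suc k:=xs ! Suc k] = xs" by (simp only: upd_upd list_update_id)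
      then show ?thesis by simp
    qed
    ultimately show "xs \<in> ?h ` (Rk s n k \<times> (Sg s \<times> Sg s))" using ab by blast
  qed
  have "(\<Sum>xs\<in>Cf s n. F xs) = (\<Sum>p\<in>Rk s n k \<times> (Sg s \<times> Sg s). F (?h p))"
    unfolding img[symmetric] by (rule sum.reindex[OF inj, unfolded comp_def])
  also have "\<dots> = (\<Sum>zs\<in>Rk s n k. \<Sum>a\<in>Sg s. \<Sum>b\<in>Sg s. F (zs[k:=a, Suc k:=b]))"
    by (simp add: sum.cartesian_product')
  finally show ?thesis .
qed

lemma sum_exchange:
  fixes c :: "int \<Rightarrow> int \<Rightarrow> complex"
  shows "(\<Sum>a\<in>A. \<Sum>b\<in>A. c a b * ((\<Sum>m\<in>M. p m a b * P m) + (\<Sum>m\<in>M'. q m a b * Q m))) =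
    (\<Sum>m\<in>M. P m * (\<Sum>a\<in>A. \<Sum>b\<in>A. p m a b * c a b)) + (\<Sum>m\<in>M'. Q m * (\<Sum>a\<in>A. \<Sum>b\<in>A. q m a b * c a b))"
proof -
  have "(\<Sum>a\<in>A. \<Sum>b\<in>A. c a b * ((\<Sum>m\<in>M. p m a b * P m) + (\<Sum>m\<in>M'. q m a b * Q m))) =
     (\<Sum>a\<in>A. \<Sum>b\<in>A. \<Sum>m\<in>M. P m * (p m a b * c a b)) + (\<Sum>a\<in>A. \<Sum>b\<in>A. \<Sum>m\<in>M'. Q m * (q m a b * c a b))"
    by (simp add: distrib_left sum_distrib_left sum.distrib mult.commute mult.left_commute)
  also have "\<dots> = (\<Sum>m\<in>M. \<Sum>a\<in>A. \<Sum>b\<in>A. P m * (p m a b * c a b)) + (\<Sum>m\<in>M'. \<Sum>a\<in>A. \<Sum>b\<in>A. Q m * (q m a b * c a b))"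
    by (subst (1 2) sum.swap, subst (1 2) sum.swap[where A = A], rule refl)
  also have "\<dots> = (\<Sum>m\<in>M. P m * (\<Sum>a\<in>A. \<Sum>b\<in>A. p m a b * c a b)) + (\<Sum>m\<in>M'. Q m * (\<Sum>a\<in>A. \<Sum>b\<in>A. q m a b * c a b))"
    by (simp only: sum_distrib_left)
  finally show ?thesis .
qed



section \<open>Kernel characterisation\<close>

definition Dp :: "(int list \<Rightarrow> complex) \<Rightarrow> int list \<Rightarrow> nat \<Rightarrow> int \<Rightarrow> complex" where
  "Dp f xs k m = f (xs[k:=0, Suc k:=m]) - f (xs[k:=m, Suc k:=0])"
definition Dc :: "(int list \<Rightarrow> complex) \<Rightarrow> int list \<Rightarrow> nat \<Rightarrow> int \<Rightarrow> complex" where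
  "Dc f xs k m = f (xs[k:=0, Suc k:=0]) - f (xs[k:=m, Suc k:=-m])"

definition Gk :: "nat \<Rightarrow> (int list \<Rightarrow> complex) \<Rightarrow> int list \<Rightarrow> nat \<Rightarrow> complex" where
  "Gk s f xs k = (\<Sum>m\<in>Sigma_star s. phi m (xs!k) (xs!Suc k) * (Dp f xs k m / r2)) +
                 (\<Sum>m\<in>{1..int s}. chi m (xs!k) (xs!Suc k) * (Dc f xs k m / r2))"

lemma hloc_sum_upd: "(\<Sum>(a,b)\<in>Sg s \<times> Sg s. hloc s x y a b * f (xs[k:=a, Suc k:=b])) =
  (\<Sum>m\<in>Sigma_star s. phi m x y * (Dp f xs k m / r2)) + (\<Sum>m\<in>{1..int s}. chi m x y * (Dc f xs k m / r2))"
  using hloc_sum[of s x y "\<lambda>a b. f (xs[k:=a, Suc k:=b])"] unfolding Dp_def Dc_def by simp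

lemma Hv_formula: "xs \<in> Cf s n \<Longrightarrow> (\<Sum>ys\<in>Cf s n. Hf s n xs ys * f ys) = (\<Sum>k<n - 1. Gk s f xs k)"
  unfolding Hf_apply Gk_def by (intro sum.cong refl) (rule hloc_sum_upd)

lemma inv_Hv0:
  assumes inv: "\<forall>xs\<in>Cf s n. \<forall>ys\<in>Cf s n. red xs = red ys \<longrightarrow> f xs = f ys" and xs: "xs \<in> Cf s n"
  shows "(\<Sum>ys\<in>Cf s n. Hf s n xs ys * f ys) = 0"
proof -
  have l: "length xs = n" using xs unfolding Cf_def by simp
  have "Gk s f xs k = 0" if k: "k < n - 1" for k
  proof -
    have k1: "k + 1 < length xs" using k l by simp
    have "Dp f xs k m = 0" if m: "m \<in> Sigma_star s" for m
    proof -
      have "m \<noteq> 0" using m unfolding Sigma_star_def by simp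
      then have "red (xs[k:=0, Suc k:=m]) = red (xs[k:=m, Suc k:=0])"
        unfolding upd_split[OF k1] by (rule red_move1)
      moreover have "xs[k:=0, Suc k:=m] \<in> Cf s n" "xs[k:=m, Suc k:=0] \<in> Cf s n"
        using upd_Cf[OF xs] zero_Sg Sigma_star_Sg'[OF m] by auto
      ultimately have "f (xs[k:=0, Suc k:=m]) = f (xs[k:=m, Suc k:=0])" using inv by blast
      then show ?thesis unfolding Dp_def by simp
    qed
    moreover have "Dc f xs k m = 0" if m: "m \<in> {1..int s}" for m
    proof -
      have "m > 0" using m by simp
      then have "red (xs[k:=0, Suc k:=0]) = red (xs[k:=m, Suc k:=-m])"
        unfolding upd_split[OF k1] by (rule red_move2)
      moreover have "xs[k:=0, Suc k:=0] \<in> Cf s n" "xs[k:=m, Suc k:=-m] \<in> Cf s n"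
        using upd_Cf[OF xs] zero_Sg pos_Sg[OF m] by auto
      ultimately have "f (xs[k:=0, Suc k:=0]) = f (xs[k:=m, Suc k:=-m])" using inv by blast
      then show ?thesis unfolding Dc_def by simp
    qed
    ultimately show ?thesis unfolding Gk_def by simp
  qed
  then show ?thesis unfolding Hv_formula[OF xs] by simp
qed

lemma r2_sq: "r2 * r2 = 2"
proof -
  have "r2 * r2 = complex_of_real (sqrt 2 * sqrt 2)" by (simp only: of_real_mult)
  also have "sqrt 2 * sqrt 2 = (2::real)" by simp
  finally show ?thesis by simp
qed

lemma Gk_upd:
  assumes zs: "length zs = n" and k: "k + 1 < n"
  shows "Gk s f (zs[k:=a, Suc k:=b]) k =
    (\<Sum>m\<in>Sigma_star s. phi m a b * (Dp f zs k m / r2)) + (\<Sum>m\<in>{1..int s}. chi m a b * (Dc f zs k m / r2))"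
  using assms unfolding Gk_def Dp_def Dc_def upd_upd by simp

lemma block_sum:
  assumes zs: "length zs = n" and k: "k + 1 < n"
  shows "(\<Sum>a\<in>Sg s. \<Sum>b\<in>Sg s. cnj (f (zs[k:=a, Suc k:=b])) * Gk s f (zs[k:=a, Suc k:=b]) k) =
    complex_of_real ((\<Sum>m\<in>Sigma_star s. (cmod (Dp f zs k m))^2 / 2) + (\<Sum>m\<in>{1..int s}. (cmod (Dc f zs k m))^2 / 2))"
proof -
  let ?c = "\<lambda>a b. cnj (f (zs[k:=a, Suc k:=b]))"
  have "(\<Sum>a\<in>Sg s. \<Sum>b\<in>Sg s. cnj (f (zs[k:=a, Suc k:=b])) * Gk s f (zs[k:=a, Suc k:=b]) k) =
     (\<Sum>a\<in>Sg s. \<Sum>b\<in>Sg s. ?c a b * ((\<Sum>m\<in>Sigma_star s. phi m a b * (Dp f zs k m / r2)) + (\<Sum>m\<in>{1..int s}. chi m a b * (Dc f zs k m / r2))))"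
    unfolding Gk_upd[OF zs k] ..
  also have "\<dots> = (\<Sum>m\<in>Sigma_star s. (Dp f zs k m / r2) * (\<Sum>a\<in>Sg s. \<Sum>b\<in>Sg s. phi m a b * ?c a b)) +
     (\<Sum>m\<in>{1..int s}. (Dc f zs k m / r2) * (\<Sum>a\<in>Sg s. \<Sum>b\<in>Sg s. chi m a b * ?c a b))"
    by (rule sum_exchange)
  also have "\<dots> = (\<Sum>m\<in>Sigma_star s. (Dp f zs k m / r2) * (cnj (Dp f zs k m) / r2)) +
     (\<Sum>m\<in>{1..int s}. (Dc f zs k m / r2) * (cnj (Dc f zs k m) / r2))"
  proof -
    have h1: "(\<Sum>a\<in>Sg s. \<Sum>b\<in>Sg s. phi m a b * ?c a b) = cnj (Dp f zs k m) / r2" if m: "m \<in> Sigma_star s" for m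
      using sum_phi[OF m, of ?c] unfolding Dp_def by simp
    have h2: "(\<Sum>a\<in>Sg s. \<Sum>b\<in>Sg s. chi m a b * ?c a b) = cnj (Dc f zs k m) / r2" if m: "m \<in> {1..int s}" for m
      using sum_chi[OF m, of ?c] unfolding Dc_def by simp
    show ?thesis by (simp only: h1 h2 cong: sum.cong)
  qed
  also have "\<dots> = complex_of_real ((\<Sum>m\<in>Sigma_star s. (cmod (Dp f zs k m))^2 / 2) + (\<Sum>m\<in>{1..int s}. (cmod (Dc f zs k m))^2 / 2))"
  proof -
    have e: "(z / r2) * (cnj z / r2) = complex_of_real ((cmod z)^2 / 2)" for z
    proof -
      have "(z / r2) * (cnj z / r2) = (z * cnj z) / (r2 * r2)" by simp
      also have "\<dots> = complex_of_real ((cmod z)^2) / 2" unfolding r2_sq complex_norm_square ..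
      finally show ?thesis by simp
    qed
    show ?thesis unfolding e by simp
  qed
  finally show ?thesis .
qed

lemma finite_Rk: "finite (Rk s n k)"
  unfolding Rk_def using finite_Cf by simp

lemma Hv0_zero:
  assumes H0: "\<forall>xs\<in>Cf s n. (\<Sum>ys\<in>Cf s n. Hf s n xs ys * f ys) = 0"
    and k: "k + 1 < n" and zs: "zs \<in> Rk s n k"
  shows "(\<forall>m\<in>Sigma_star s. Dp f zs k m = 0) \<and> (\<forall>m\<in>{1..int s}. Dc f zs k m = 0)"
proof -
  define W where "W k zs = (\<Sum>m\<in>Sigma_star s. (cmod (Dp f zs k m))^2 / 2) + (\<Sum>m\<in>{1..int s}. (cmod (Dc f zs k m))^2 / 2)" for k zs
  have W_nonneg: "0 \<le> W k zs" for k zs unfolding W_def by (intro add_nonneg_nonneg sum_nonneg) auto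
  have "0 = (\<Sum>xs\<in>Cf s n. cnj (f xs) * (\<Sum>ys\<in>Cf s n. Hf s n xs ys * f ys))" using H0 by simp
  also have "\<dots> = (\<Sum>xs\<in>Cf s n. \<Sum>k<n - 1. cnj (f xs) * Gk s f xs k)"
    by (intro sum.cong refl) (simp add: Hv_formula sum_distrib_left)
  also have "\<dots> = (\<Sum>k<n - 1. \<Sum>xs\<in>Cf s n. cnj (f xs) * Gk s f xs k)" by (rule sum.swap)
  also have "\<dots> = (\<Sum>k<n - 1. complex_of_real (\<Sum>zs\<in>Rk s n k. W k zs))"
  proof (rule sum.cong[OF refl])
    fix k assume "k \<in> {..<n - 1}"
    then have k: "k + 1 < n" by simp
    have "(\<Sum>xs\<in>Cf s n. cnj (f xs) * Gk s f xs k) =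
      (\<Sum>zs\<in>Rk s n k. \<Sum>a\<in>Sg s. \<Sum>b\<in>Sg s. cnj (f (zs[k:=a, Suc k:=b])) * Gk s f (zs[k:=a, Suc k:=b]) k)"
      by (rule Cf_reindex[OF k])
    also have "\<dots> = (\<Sum>zs\<in>Rk s n k. complex_of_real (W k zs))"
    proof (rule sum.cong[OF refl])
      fix zs assume "zs \<in> Rk s n k"
      then have "length zs = n" unfolding Rk_def Cf_def by simp
      then show "(\<Sum>a\<in>Sg s. \<Sum>b\<in>Sg s. cnj (f (zs[k:=a, Suc k:=b])) * Gk s f (zs[k:=a, Suc k:=b]) k) =
         complex_of_real (W k zs)" unfolding W_def by (rule block_sum[OF _ k])
    qed
    also have "\<dots> = complex_of_real (\<Sum>zs\<in>Rk s n k. W k zs)" by simp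
    finally show "(\<Sum>xs\<in>Cf s n. cnj (f xs) * Gk s f xs k) = complex_of_real (\<Sum>zs\<in>Rk s n k. W k zs)" .
  qed
  also have "\<dots> = complex_of_real (\<Sum>k<n - 1. \<Sum>zs\<in>Rk s n k. W k zs)" by simp
  finally have "complex_of_real (\<Sum>k<n - 1. \<Sum>zs\<in>Rk s n k. W k zs) = 0" by (rule sym)
  then have "(\<Sum>k<n - 1. \<Sum>zs\<in>Rk s n k. W k zs) = 0" by (simp only: of_real_eq_0_iff)
  then have "\<forall>k\<in>{..<n - 1}. (\<Sum>zs\<in>Rk s n k. W k zs) = 0"
    by (subst (asm) sum_nonneg_eq_0_iff) (auto intro: sum_nonneg W_nonneg)
  then have "(\<Sum>zs\<in>Rk s n k. W k zs) = 0" using k by simp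
  then have "W k zs = 0" using zs by (subst (asm) sum_nonneg_eq_0_iff) (auto simp: finite_Rk W_nonneg)
  then have "(\<Sum>m\<in>Sigma_star s. (cmod (Dp f zs k m))^2 / 2) = 0 \<and> (\<Sum>m\<in>{1..int s}. (cmod (Dc f zs k m))^2 / 2) = 0"
    unfolding W_def by (intro add_nonneg_eq_0_iff[THEN iffD1] sum_nonneg) auto
  then have "(\<forall>m\<in>Sigma_star s. (cmod (Dp f zs k m))^2 / 2 = 0) \<and> (\<forall>m\<in>{1..int s}. (cmod (Dc f zs k m))^2 / 2 = 0)"
    by (simp add: sum_nonneg_eq_0_iff finite_Sigma_star)
  then show ?thesis by simp
qed

lemma Hv0_minv:
  assumes H0: "\<forall>xs\<in>Cf s n. (\<Sum>ys\<in>Cf s n. Hf s n xs ys * f ys) = 0"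
  shows "minv s n f"
  unfolding minv_def
proof (intro allI impI conjI)
  fix pre post :: "int list" and m :: int
  assume h: "length pre + length post + 2 = n \<and> set pre \<subseteq> Sg s \<and> set post \<subseteq> Sg s"
  define k where "k = length pre"
  define zs where "zs = pre @ [0,0] @ post"
  have k1: "k + 1 < n" "k + 1 < length zs" using h unfolding k_def zs_def by auto
  have zR: "zs \<in> Rk s n k" using h zero_Sg unfolding Rk_def Cf_def zs_def k_def by (auto simp: nth_append)
  have tk: "take k zs = pre" "drop (Suc (Suc k)) zs = post" unfolding zs_def k_def by simp_all
  have upd: "zs[k:=a, Suc k:=b] = pre @ [a,b] @ post" for a b
    unfolding upd_split[OF k1(2)] tk ..
  note z = Hv0_zero[OF H0 k1(1) zR]
  show "m \<in> Sigma_star s \<Longrightarrow> f (pre @ [0, m] @ post) = f (pre @ [m, 0] @ post)"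
    using z unfolding Dp_def upd by simp
  show "m \<in> {1..int s} \<Longrightarrow> f (pre @ [0, 0] @ post) = f (pre @ [m, - m] @ post)"
    using z unfolding Dc_def upd by simp
qed

section \<open>Kernel dimension\<close>

lemma mat_kernel_Ham:
  "v \<in> mat_kernel (Ham s n) \<longleftrightarrow> dim_vec v = ldim s ^ n \<and>
     (\<forall>xs\<in>Cf s n. (\<Sum>ys\<in>Cf s n. Hf s n xs ys * v $ enc s ys) = 0)"
proof -
  let ?N = "ldim s ^ n"
  have "v \<in> mat_kernel (Ham s n) \<longleftrightarrow> dim_vec v = ?N \<and> Ham s n *\<^sub>v v = 0\<^sub>v ?N"
  proof -
    have "dim_col (Ham s n) = ?N" "dim_row (Ham s n) = ?N" unfolding Ham_def by simp_all
    then show ?thesis unfolding mat_kernel_def carrier_dim_vec by simp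
  qed
  also have "\<dots> \<longleftrightarrow> dim_vec v = ?N \<and> (\<forall>i<?N. (Ham s n *\<^sub>v v) $ i = 0)"
  proof -
    have "dim_vec (Ham s n *\<^sub>v v) = ?N" using Ham_carrier[of s n] by simp
    then have "Ham s n *\<^sub>v v = 0\<^sub>v ?N \<longleftrightarrow> (\<forall>i<?N. (Ham s n *\<^sub>v v) $ i = 0)"
    proof (intro iffI allI impI)
      fix i assume z: "Ham s n *\<^sub>v v = 0\<^sub>v ?N" and i: "i < ?N"
      show "(Ham s n *\<^sub>v v) $ i = 0" unfolding z using i by simp
    next
      assume d: "dim_vec (Ham s n *\<^sub>v v) = ?N" and h: "\<forall>i<?N. (Ham s n *\<^sub>v v) $ i = 0"
      show "Ham s n *\<^sub>v v = 0\<^sub>v ?N"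
      proof (rule eq_vecI)
        fix i assume "i < dim_vec (0\<^sub>v ?N :: complex vec)"
        then have i: "i < ?N" by simp
        have "(Ham s n *\<^sub>v v) $ i = 0" using h i by blast
        then show "(Ham s n *\<^sub>v v) $ i = (0\<^sub>v ?N :: complex vec) $ i" using i by simp
      qed (use d in simp)
    qed
    then show ?thesis by blast
  qed
  also have "\<dots> \<longleftrightarrow> dim_vec v = ?N \<and> (\<forall>i<?N. (\<Sum>ys\<in>Cf s n. Hf s n (dec s n i) ys * v $ enc s ys) = 0)"
    using Ham_mult by auto
  also have "\<dots> \<longleftrightarrow> dim_vec v = ?N \<and> (\<forall>xs\<in>Cf s n. (\<Sum>ys\<in>Cf s n. Hf s n xs ys * v $ enc s ys) = 0)"
  proof -
    have "(\<forall>i<?N. (\<Sum>ys\<in>Cf s n. Hf s n (dec s n i) ys * v $ enc s ys) = 0) \<longleftrightarrow>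
          (\<forall>xs\<in>Cf s n. (\<Sum>ys\<in>Cf s n. Hf s n xs ys * v $ enc s ys) = 0)"
    proof
      assume h: "\<forall>i<?N. (\<Sum>ys\<in>Cf s n. Hf s n (dec s n i) ys * v $ enc s ys) = 0"
      show "\<forall>xs\<in>Cf s n. (\<Sum>ys\<in>Cf s n. Hf s n xs ys * v $ enc s ys) = 0"
      proof
        fix xs assume "xs \<in> Cf s n"
        then have "dec s n (enc s xs) = xs" "enc s xs < ?N" using dec_enc by auto
        then show "(\<Sum>ys\<in>Cf s n. Hf s n xs ys * v $ enc s ys) = 0" using h by metis
      qed
    next
      assume h: "\<forall>xs\<in>Cf s n. (\<Sum>ys\<in>Cf s n. Hf s n xs ys * v $ enc s ys) = 0"
      show "\<forall>i<?N. (\<Sum>ys\<in>Cf s n. Hf s n (dec s n i) ys * v $ enc s ys) = 0"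
        using h dec_Cf by blast
    qed
    then show ?thesis by blast
  qed
  finally show ?thesis .
qed

lemma canon_props:
  assumes "xs \<in> Cf s n"
  shows "canon n (red xs) \<in> Cf s n" "red (canon n (red xs)) = red xs"
proof -
  have p: "rdd (red xs)" "set (red xs) \<subseteq> set xs - {0}" "length (red xs) \<le> length xs"
    using red_props[of xs] by auto
  have "set (canon n (red xs)) \<subseteq> Sg s" using assms p(2) zero_Sg unfolding canon_def Cf_def by auto
  then show "canon n (red xs) \<in> Cf s n" using assms p(3) unfolding canon_def Cf_def by auto
  show "red (canon n (red xs)) = red xs" using red_canon[OF p(1)] p(2) by blast
qed

lemma kernel_dim_Ham: "kernel_dim (Ham s n) = card (red ` Cf s n)"
proof -
  let ?N = "ldim s ^ n"
  let ?A = "Ham s n"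
  interpret K: kernel ?N ?N ?A by unfold_locales (rule Ham_carrier)
  define W where "W = red ` Cf s n"
  have finW: "finite W" unfolding W_def using finite_Cf by simp
  define e where "e w = vec ?N (\<lambda>i. if red (dec s n i) = w then (1::complex) else 0)" for w
  define ix where "ix w = enc s (canon n w)" for w
  have ixp: "ix w < ?N" "dec s n (ix w) = canon n w" "red (canon n w) = w" if "w \<in> W" for w
  proof -
    obtain xs where xs: "xs \<in> Cf s n" "w = red xs" using \<open>w \<in> W\<close> unfolding W_def by blast
    show "ix w < ?N" "dec s n (ix w) = canon n w" unfolding ix_def xs(2)
      using dec_enc[OF canon_props(1)[OF xs(1)]] by auto
    show "red (canon n w) = w" unfolding xs(2) using canon_props(2)[OF xs(1)] .
  qed
  have e_ix: "e w' $ ix w = (if w = w' then 1 else 0)" if "w \<in> W" for w w'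
    unfolding e_def using ixp[OF that] by simp
  have inj: "inj_on e W"
  proof (rule inj_onI)
    fix w w' assume "w \<in> W" "w' \<in> W" "e w = e w'"
    then have "e w $ ix w = e w' $ ix w" by simp
    then show "w = w'" using e_ix[OF \<open>w \<in> W\<close>] by (metis zero_neq_one)
  qed
  define B where "B = e ` W"
  have finB: "finite B" unfolding B_def using finW by simp
  have f_e: "e w $ enc s ys = (if red ys = w then 1 else 0)" if "ys \<in> Cf s n" for w ys
    using dec_enc[OF that] unfolding e_def by simp
  have Bk: "B \<subseteq> mat_kernel ?A"
  proof
    fix b assume "b \<in> B"
    then obtain w where b: "b = e w" unfolding B_def by blast
    have "(\<Sum>ys\<in>Cf s n. Hf s n xs ys * b $ enc s ys) = 0" if xs: "xs \<in> Cf s n" for xs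
      by (rule inv_Hv0[OF _ xs]) (simp add: b f_e)
    then show "b \<in> mat_kernel ?A" unfolding mat_kernel_Ham b e_def by simp
  qed
  have lc: "K.lincomb a B $ i = (\<Sum>w\<in>W. a (e w) * e w $ i)" if "i < ?N" for a i
  proof -
    have "K.lincomb a B $ i = (\<Sum>b\<in>B. a b * b $ i)" by (rule K.lincomb_index[OF that Bk])
    also have "\<dots> = (\<Sum>w\<in>W. a (e w) * e w $ i)" unfolding B_def by (rule sum.reindex[OF inj, unfolded comp_def])
    finally show ?thesis .
  qed
  have indpt: "K.lin_indpt B"
  proof (rule K.Ker.finite_lin_indpt2[OF finB Bk])
    fix a assume "a \<in> B \<rightarrow> UNIV" and z: "K.lincomb a B = 0\<^sub>v ?N"
    show "\<forall>b\<in>B. a b = 0"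
    proof
      fix b assume "b \<in> B"
      then obtain w where w: "w \<in> W" "b = e w" unfolding B_def by blast
      have "0 = K.lincomb a B $ ix w" using z ixp(1)[OF w(1)] by simp
      also have "\<dots> = (\<Sum>w'\<in>W. a (e w') * (if w = w' then 1 else 0))"
        unfolding lc[OF ixp(1)[OF w(1)]] using e_ix[OF w(1)] by simp
      also have "\<dots> = (\<Sum>w'\<in>W. if w = w' then a (e w') else 0)" by (intro sum.cong refl) simp
      also have "\<dots> = a (e w)" using w(1) finW by (simp add: sum.delta)
      finally show "a b = 0" using w(2) by simp
    qed
  qed
  have span: "K.span B = mat_kernel ?A"
  proof
    show "K.span B \<subseteq> mat_kernel ?A" by (rule K.Ker.span_is_subset2[OF Bk])
  next
    show "mat_kernel ?A \<subseteq> K.span B"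
    proof
      fix v assume v: "v \<in> mat_kernel ?A"
      then have dv: "dim_vec v = ?N" and H0: "\<forall>xs\<in>Cf s n. (\<Sum>ys\<in>Cf s n. Hf s n xs ys * v $ enc s ys) = 0"
        unfolding mat_kernel_Ham by auto
      have mi: "minv s n (\<lambda>ys. v $ enc s ys)" by (rule Hv0_minv[OF H0])
      define a where "a b = v $ ix (inv_into W e b)" for b
      have lcv: "K.lincomb a B = v"
      proof (rule eq_vecI)
        have "K.lincomb a B \<in> mat_kernel ?A" using K.Ker.lincomb_closed[OF Bk] by simp
        then show "dim_vec (K.lincomb a B) = dim_vec v" using dv unfolding mat_kernel_Ham by simp
        fix i assume "i < dim_vec v"
        then have i: "i < ?N" using dv by simp
        have di: "dec s n i \<in> Cf s n" by (rule dec_Cf)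
        have rW: "red (dec s n i) \<in> W" unfolding W_def using di by blast
        have "K.lincomb a B $ i = (\<Sum>w\<in>W. v $ ix w * e w $ i)"
          unfolding lc[OF i] a_def using inv_into_f_f[OF inj] by (intro sum.cong refl) simp
        also have "\<dots> = (\<Sum>w\<in>W. if w = red (dec s n i) then v $ ix w else 0)"
          unfolding e_def using i by (intro sum.cong refl) auto
        also have "\<dots> = v $ ix (red (dec s n i))" using rW finW by (simp add: sum.delta')
        also have "\<dots> = v $ enc s (dec s n i)"
          unfolding ix_def using connect[OF mi di] by simp
        also have "\<dots> = v $ i" using enc_dec[OF i] by simp
        finally show "K.lincomb a B $ i = v $ i" .
      qed
      have "K.lincomb a B \<in> K.span B" unfolding K.Ker.span_def using finB by blast
      then show "v \<in> K.span B" using lcv by simp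
    qed
  qed
  have "K.basis B" unfolding K.Ker.basis_def using indpt span Bk by simp
  then have "K.dim = card B" by (rule K.Ker.dim_basis[OF finB])
  also have "\<dots> = card W" unfolding B_def by (rule card_image[OF inj])
  finally show ?thesis using K.kernel_dim unfolding W_def by simp
qed

theorem corollary1:
  fixes s :: nat
  assumes "s \<ge> 2"
  defines "rp \<equiv> real s * (1 + sqrt (1 - 1 / real s))"
      and "rm \<equiv> real s * (1 - sqrt (1 - 1 / real s))"
  shows "(\<forall>n\<ge>1. kernel_dim (Ham s n) = (\<Sum>k=0..n. card (T s k)) \<and>
            real (kernel_dim (Ham s n)) = (rp ^ (n + 1) + rm ^ (n + 1) - 2) / (2 * (real s - 1)))
         \<and> (\<lambda>n. real (kernel_dim (Ham s n)) / (rp ^ (n + 1) / (2 * (real s - 1)))) \<longlonglongrightarrow> 1"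
proof -
  define q where "q = sqrt (1 - 1 / real s)"
  have s2: "real s \<ge> 2" using assms(1) by simp
  have in01: "0 < 1 - 1 / real s" "1 - 1 / real s < 1" using s2 by (auto simp: field_simps)
  have q: "0 < q" "q < 1" "q^2 = 1 - 1 / real s" unfolding q_def using in01 by auto
  have rp: "rp = real s * (1 + q)" and rm: "rm = real s * (1 - q)" unfolding rp_def rm_def q_def by simp_all
  have sum_r: "rp + rm = 2 * real s" unfolding rp rm by (simp add: algebra_simps)
  have prod_r: "rp * rm = real s"
  proof -
    have "rp * rm = real s * real s * (1 - q^2)" unfolding rp rm by (simp add: power2_eq_square algebra_simps)
    also have "\<dots> = real s" unfolding q(3) using s2 by (simp add: field_simps)
    finally show ?thesis .
  qed
  have rpos: "rp > 1" "rm > 0" "rm < rp"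
  proof -
    have sq: "real s * q \<ge> 0" using q by simp
    have "rp = real s + real s * q" unfolding rp by (simp add: algebra_simps)
    then show "rp > 1" using sq s2 by linarith
    show "rm > 0" unfolding rm using q s2 by simp
    have "real s * (1 - q) < real s * (1 + q)" using q s2 by (intro mult_strict_left_mono) auto
    then show "rm < rp" unfolding rp rm .
  qed
  define c where "c k = real (card (TT s k))" for k
  have c0: "c 0 = 1" unfolding c_def using TT0 by simp
  have c1: "c 1 = 2 * real s" unfolding c_def using TT1 by simp
  have cS: "c (Suc (Suc k)) = 2 * real s * c (Suc k) - real s * c k" for k
  proof -
    have "real (card (TT s (Suc (Suc k))) + s * card (TT s k)) = real (2 * s * card (TT s (Suc k)))"
      using TT_SS[of s k] by presburger
    then show ?thesis unfolding c_def by (simp add: algebra_simps)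
  qed
  have cc: "c k * (rp - rm) = rp ^ (k + 1) - rm ^ (k + 1)" for k
    by (rule closed_c[OF sum_r prod_r c0 c1 cS])
  have csum: "2 * (real s - 1) * (\<Sum>k=0..n. c k) = rp ^ (n + 1) + rm ^ (n + 1) - 2" for n
    by (rule closed_sum[OF sum_r prod_r _ c0 cc]) (use rpos in simp)
  have kd: "kernel_dim (Ham s n) = (\<Sum>k=0..n. card (T s k))" for n
    unfolding kernel_dim_Ham card_red_image T_TT ..
  have kdr: "real (kernel_dim (Ham s n)) = (rp ^ (n + 1) + rm ^ (n + 1) - 2) / (2 * (real s - 1))" for n
  proof -
    have "real (kernel_dim (Ham s n)) = (\<Sum>k=0..n. c k)" unfolding kd c_def T_TT by simp
    then show ?thesis using csum[of n] s2 by (simp add: field_simps)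
  qed
  have lim: "(\<lambda>n. 1 + (rm / rp) ^ Suc n - 2 * (1 / rp) ^ Suc n) \<longlonglongrightarrow> 1 + 0 - 2 * 0"
  proof (intro tendsto_intros LIMSEQ_Suc LIMSEQ_power_zero)
    show "norm (rm / rp) < 1" using rpos by simp
    show "norm (1 / rp) < 1" using rpos by simp
  qed
  have eq: "real (kernel_dim (Ham s n)) / (rp ^ (n + 1) / (2 * (real s - 1))) =
     1 + (rm / rp) ^ Suc n - 2 * (1 / rp) ^ Suc n" for n
  proof -
    define P where "P = rp ^ Suc n"
    define Q where "Q = rm ^ Suc n"
    define d where "d = 2 * (real s - 1)"
    have P: "P > 0" unfolding P_def using rpos by simp
    have d: "d > 0" unfolding d_def using s2 by simp
    have "real (kernel_dim (Ham s n)) / (rp ^ (n + 1) / (2 * (real s - 1))) = ((P + Q - 2) / d) / (P / d)"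
      unfolding kdr P_def Q_def d_def by simp
    also have "\<dots> = (P + Q - 2) / P" using d P by simp
    also have "\<dots> = 1 + Q / P - 2 * (1 / P)" using P by (simp add: diff_divide_distrib add_divide_distrib)
    also have "\<dots> = 1 + (rm / rp) ^ Suc n - 2 * (1 / rp) ^ Suc n"
      unfolding P_def Q_def by (simp add: power_divide)
    finally show ?thesis .
  qed
  show ?thesis using kd kdr lim unfolding eq by simp
qed

end
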